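(* Let $G$ be a connected plane graph with real arc lengths, no negative cycles and unique shortest paths, and let $S$ be a generic, independent set of exactly $3$ sites located at vertices on the outer face of $G$. Then the abstract Voronoi diagram $\mathrm{AVD}(S)$ has at most one vertex other than $a_\infty$.
   Context: A site is a pair $s=(v_s,w_s)$ with $v_s\in V(G)$, $w_s\in\mathbb{R}$. $\mathrm{cell}_G(s,S)=\{x\in V(G):\forall t\in S\setminus\{s\},\ w_s+d_G(v_s,x)\le w_t+d_G(v_t,x)\}$; $S$ is generic if these inequalities are never equalities for distinct sites, and independent if all cells are nonempty. $\mathrm{GD}_G(s,t)=\mathrm{cell}_G(s,\{s,t\})$. $\mathrm{bis}_G(s,t)$ is the closed curve of the cycle in the dual graph $G^*$ formed by the duals of the edges $xy$ with $x\in\mathrm{GD}_G(s,t)$, $y\in\mathrm{GD}_G(t,s)$; $D_G(s,t)$ is the component of $\mathbb{R}^2\setminus\mathrm{bis}_G(s,t)$ containing $v_s$; $\mathrm{AVR}(s,S)=\bigcap_{t\ne s}D_G(s,t)$; $\mathrm{AVD}(S)=\mathbb{R}^2\setminus\bigcup_{s\in S}\mathrm{AVR}(s,S)$, which is a plane graph contained in $G^*$ whose vertices are its points of degree at least $3$. $a_\infty$ is the vertex of $G^*$ dual to the outer face of $G$. *)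

theory Defs
  imports Complex_Main
begin

text \<open>A plane graph is represented combinatorially by a rotation system (combinatorial map)
  of genus 0 with a designated outer face.  Darts = arcs; every edge consists of two
  opposite arcs d and rv d, each with its own real length.\<close>

record ('v, 'd) pmap =
  verts :: "'v set"
  darts :: "'d set"
  tl_of :: "'d \<Rightarrow> 'v"
  hd_of :: "'d \<Rightarrow> 'v"
  rv :: "'d \<Rightarrow> 'd"
  rot :: "'d \<Rightarrow> 'd"
  len :: "'d \<Rightarrow> real"
  outer :: "'d set"

definition face_perm :: "('v, 'd) pmap \<Rightarrow> 'd \<Rightarrow> 'd" where
  "face_perm G = (\<lambda>d. rot G (rv G d))"

definition face_of :: "('v, 'd) pmap \<Rightarrow> 'd \<Rightarrow> 'd set" where
  "face_of G d = {(face_perm G ^^ n) d | n. True}"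

definition faces :: "('v, 'd) pmap \<Rightarrow> 'd set set" where
  "faces G = face_of G ` darts G"

fun is_walk :: "('v, 'd) pmap \<Rightarrow> 'v \<Rightarrow> 'd list \<Rightarrow> 'v \<Rightarrow> bool" where
  "is_walk G u [] x \<longleftrightarrow> u = x \<and> u \<in> verts G"
| "is_walk G u (d # ds) x \<longleftrightarrow> d \<in> darts G \<and> tl_of G d = u \<and> is_walk G (hd_of G d) ds x"

definition is_path :: "('v, 'd) pmap \<Rightarrow> 'v \<Rightarrow> 'd list \<Rightarrow> 'v \<Rightarrow> bool" where
  "is_path G u ds x \<longleftrightarrow> is_walk G u ds x \<and> distinct (u # map (hd_of G) ds)"

definition walk_len :: "('v, 'd) pmap \<Rightarrow> 'd list \<Rightarrow> real" where
  "walk_len G ds = sum_list (map (len G) ds)"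

definition connected_map :: "('v, 'd) pmap \<Rightarrow> bool" where
  "connected_map G \<longleftrightarrow> (\<forall>u\<in>verts G. \<forall>x\<in>verts G. \<exists>ds. is_walk G u ds x)"

definition plane_map :: "('v, 'd) pmap \<Rightarrow> bool" where
  "plane_map G \<longleftrightarrow>
     finite (verts G) \<and> finite (darts G) \<and>
     (\<forall>d\<in>darts G. tl_of G d \<in> verts G \<and> hd_of G d \<in> verts G \<and> rv G d \<in> darts G \<and>
                    rv G (rv G d) = d \<and> rv G d \<noteq> d \<and> hd_of G d = tl_of G (rv G d)) \<and>
     bij_betw (rot G) (darts G) (darts G) \<and>
     (\<forall>d\<in>darts G. {(rot G ^^ n) d | n. True} = {d'\<in>darts G. tl_of G d' = tl_of G d}) \<and>
     2 * int (card (verts G)) - int (card (darts G)) + 2 * int (card (faces G)) = 4 \<and>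
     outer G \<in> faces G"

definition dist :: "('v, 'd) pmap \<Rightarrow> 'v \<Rightarrow> 'v \<Rightarrow> real" where
  "dist G u x = Inf {walk_len G ds | ds. is_walk G u ds x}"

definition no_neg_cycles :: "('v, 'd) pmap \<Rightarrow> bool" where
  "no_neg_cycles G \<longleftrightarrow> (\<forall>u ds. is_walk G u ds u \<longrightarrow> walk_len G ds \<ge> 0)"

definition unique_shortest_paths :: "('v, 'd) pmap \<Rightarrow> bool" where
  "unique_shortest_paths G \<longleftrightarrow>
     (\<forall>u\<in>verts G. \<forall>x\<in>verts G. \<exists>!ds. is_path G u ds x \<and> walk_len G ds = dist G u x)"

text \<open>Sites: (vertex, weight).\<close>
type_synonym 'v site = "'v \<times> real"

definition cell :: "('v, 'd) pmap \<Rightarrow> 'v site \<Rightarrow> 'v site set \<Rightarrow> 'v set" where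
  "cell G s S = {x \<in> verts G. \<forall>t\<in>S - {s}.
      snd s + dist G (fst s) x \<le> snd t + dist G (fst t) x}"

definition generic :: "('v, 'd) pmap \<Rightarrow> 'v site set \<Rightarrow> bool" where
  "generic G S \<longleftrightarrow> (\<forall>s\<in>S. \<forall>t\<in>S. s \<noteq> t \<longrightarrow>
      (\<forall>x\<in>verts G. snd s + dist G (fst s) x \<noteq> snd t + dist G (fst t) x))"

definition independent :: "('v, 'd) pmap \<Rightarrow> 'v site set \<Rightarrow> bool" where
  "independent G S \<longleftrightarrow> (\<forall>s\<in>S. cell G s S \<noteq> {})"

definition GD :: "('v, 'd) pmap \<Rightarrow> 'v site \<Rightarrow> 'v site \<Rightarrow> 'v set" where
  "GD G s t = cell G s {s, t}"

text \<open>Arcs whose dual edges form bis(s,t).\<close>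
definition bis_dart :: "('v, 'd) pmap \<Rightarrow> 'v site \<Rightarrow> 'v site \<Rightarrow> 'd \<Rightarrow> bool" where
  "bis_dart G s t d \<longleftrightarrow> d \<in> darts G \<and>
     ((tl_of G d \<in> GD G s t \<and> hd_of G d \<in> GD G t s) \<or> (tl_of G d \<in> GD G t s \<and> hd_of G d \<in> GD G s t))"

text \<open>Primal vertices lying in D_G(s,t): those reachable from v_s without crossing bis(s,t).\<close>
definition side :: "('v, 'd) pmap \<Rightarrow> 'v site \<Rightarrow> 'v site \<Rightarrow> 'v set" where
  "side G s t = {x. \<exists>ds. is_walk G (fst s) ds x \<and> (\<forall>d\<in>set ds. \<not> bis_dart G s t d)}"

text \<open>The (interior of the) dual edge of arc d lies in the open region D_G(s,t).\<close>
definition dual_edge_in_D :: "('v, 'd) pmap \<Rightarrow> 'v site \<Rightarrow> 'v site \<Rightarrow> 'd \<Rightarrow> bool" where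
  "dual_edge_in_D G s t d \<longleftrightarrow> \<not> bis_dart G s t d \<and> tl_of G d \<in> side G s t"

definition dual_edge_in_AVR :: "('v, 'd) pmap \<Rightarrow> 'v site set \<Rightarrow> 'v site \<Rightarrow> 'd \<Rightarrow> bool" where
  "dual_edge_in_AVR G S s d \<longleftrightarrow> (\<forall>t\<in>S - {s}. dual_edge_in_D G s t d)"

text \<open>The dual edge of d is an edge of AVD(S).\<close>
definition AVD_edge :: "('v, 'd) pmap \<Rightarrow> 'v site set \<Rightarrow> 'd \<Rightarrow> bool" where
  "AVD_edge G S d \<longleftrightarrow> d \<in> darts G \<and> (\<forall>s\<in>S. \<not> dual_edge_in_AVR G S s d)"

text \<open>Degree in AVD(S) of the dual vertex f (a face = set of darts); loops count twice.\<close>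
definition AVD_deg :: "('v, 'd) pmap \<Rightarrow> 'v site set \<Rightarrow> 'd set \<Rightarrow> nat" where
  "AVD_deg G S f = card {d \<in> f. AVD_edge G S d}"

definition AVD_vertices :: "('v, 'd) pmap \<Rightarrow> 'v site set \<Rightarrow> 'd set set" where
  "AVD_vertices G S = {f \<in> faces G. AVD_deg G S f \<ge> 3}"

definition on_outer_face :: "('v, 'd) pmap \<Rightarrow> 'v \<Rightarrow> bool" where
  "on_outer_face G v \<longleftrightarrow> (\<exists>d\<in>outer G. tl_of G d = v)"

end

theory Submission
  imports Defs "HOL-Combinatorics.Orbits"
begin


definition ncyc :: "('a \<Rightarrow> 'a) \<Rightarrow> 'a set \<Rightarrow> nat" where
  "ncyc f D = card (orbit f ` D)"

definition outo :: "('a \<Rightarrow> 'a) \<Rightarrow> 'a set \<Rightarrow> 'a set \<Rightarrow> 'a set set" where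
  "outo f D T = {Q \<in> orbit f ` D. Q \<inter> T = {}}"

lemma perm_fin: "f permutes D \<Longrightarrow> finite D \<Longrightarrow> permutation f"
  using permutation_permutes by blast

lemma orbit_same:
  assumes "permutation f" "y \<in> orbit f x" shows "orbit f y = orbit f x"
  using assms cyclic_on_orbit' orbit_cyclic_eq3 by metis

lemma orbit_self: "permutation f \<Longrightarrow> x \<in> orbit f x"
  by (rule permutation_self_in_orbit)

lemma funpow_Suc_orbit: "(f ^^ Suc n) x \<in> orbit f x"
  unfolding orbit_altdef by (intro CollectI exI[of _ "Suc n"]) simp

lemma OA:
  assumes "permutation f" "orbit f y \<inter> {x, w} = {}"
  shows "orbit (f \<circ> Transposition.transpose x w) y = orbit f y"
proof (rule orbit_cong)
  show "y \<in> orbit f y" using assms(1) by (rule orbit_self)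
  fix s assume "s \<in> orbit f y"
  then have "s \<noteq> x" "s \<noteq> w" using assms(2) by auto
  then show "(f \<circ> Transposition.transpose x w) s = f s" by simp
qed

lemma tt: "f \<circ> Transposition.transpose x w \<circ> Transposition.transpose x w = f"
  by (simp add: comp_assoc)

lemma out_eq:
  assumes "f permutes D" "finite D" "x \<in> D" "w \<in> D"
  shows "outo (f \<circ> Transposition.transpose x w) D {x,w} = outo f D {x,w}"
proof -
  let ?g = "f \<circ> Transposition.transpose x w"
  have pf: "permutation f" using assms perm_fin by blast
  have gp: "?g permutes D" using assms by (intro permutes_compose permutes_swap_id)
  then have pg: "permutation ?g" using assms perm_fin by blast
  show ?thesis
  proof (intro set_eqI iffI)
    fix Q assume "Q \<in> outo ?g D {x,w}"
    then obtain y where y: "y \<in> D" "Q = orbit ?g y" "Q \<inter> {x,w} = {}" by (auto simp: outo_def)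
    have "orbit (?g \<circ> Transposition.transpose x w) y = orbit ?g y" using OA[OF pg] y by simp
    then have "orbit f y = Q" using y by (simp add: tt)
    then show "Q \<in> outo f D {x,w}" using y by (auto simp: outo_def)
  next
    fix Q assume "Q \<in> outo f D {x,w}"
    then obtain y where y: "y \<in> D" "Q = orbit f y" "Q \<inter> {x,w} = {}" by (auto simp: outo_def)
    have "orbit ?g y = Q" using OA[OF pf] y by simp
    then show "Q \<in> outo ?g D {x,w}" using y by (auto simp: outo_def)
  qed
qed

lemma ncyc_split:
  assumes "f permutes D" "finite D" "x \<in> D" "w \<in> D"
  shows "ncyc f D = card (outo f D {x,w}) + card {orbit f x, orbit f w}"
proof -
  have pf: "permutation f" using assms perm_fin by blast
  have eq: "orbit f ` D = outo f D {x,w} \<union> {orbit f x, orbit f w}"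
  proof (intro set_eqI iffI)
    fix Q assume Q: "Q \<in> orbit f ` D"
    show "Q \<in> outo f D {x,w} \<union> {orbit f x, orbit f w}"
    proof (cases "Q \<inter> {x,w} = {}")
      case True then show ?thesis using Q by (auto simp: outo_def)
    next
      case False
      then obtain y z where "y \<in> D" "Q = orbit f y" "z \<in> {x,w}" "z \<in> orbit f y" using Q by auto
      then have "Q = orbit f z" using orbit_same[OF pf] by metis
      then show ?thesis using \<open>z \<in> {x,w}\<close> by auto
    qed
  next
    fix Q assume "Q \<in> outo f D {x,w} \<union> {orbit f x, orbit f w}"
    then show "Q \<in> orbit f ` D" using assms by (auto simp: outo_def)
  qed
  have disj: "outo f D {x,w} \<inter> {orbit f x, orbit f w} = {}"
    using orbit_self[OF pf, of x] orbit_self[OF pf, of w] by (auto simp: outo_def)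
  have fin: "finite (outo f D {x,w})" using assms by (auto simp: outo_def)
  show ?thesis unfolding ncyc_def eq using card_Un_disjoint[OF fin _ disj] by simp
qed

lemma merge_reach:
  assumes "permutation f" "w \<notin> orbit f x"
  shows "w \<in> orbit (f \<circ> Transposition.transpose x w) x"
proof -
  define g where "g = f \<circ> Transposition.transpose x w"
  have gapp: "g y = f (Transposition.transpose x w y)" for y by (simp add: g_def)
  have claim: "w \<in> orbit g x \<or> (g ^^ Suc i) x = (f ^^ Suc i) w" for i
  proof (induction i)
    case 0 then show ?case by (simp add: gapp)
  next
    case (Suc i)
    show ?case
    proof (cases "w \<in> orbit g x")
      case True then show ?thesis by blast
    next
      case False
      then have eq: "(g ^^ Suc i) x = (f ^^ Suc i) w" using Suc by blast
      have "(f ^^ Suc i) w \<noteq> w"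
      proof
        assume "(f ^^ Suc i) w = w"
        then have "(g ^^ Suc i) x = w" using eq by simp
        then show False using False funpow_Suc_orbit[of i g x] by simp
      qed
      moreover have "(f ^^ Suc i) w \<noteq> x"
      proof
        assume h: "(f ^^ Suc i) w = x"
        have "x \<in> orbit f w" using funpow_Suc_orbit[of i f w] h by simp
        then have "orbit f x = orbit f w" using orbit_same[OF assms(1)] by metis
        then show False using assms orbit_self by metis
      qed
      ultimately have tw: "Transposition.transpose x w ((f ^^ Suc i) w) = (f ^^ Suc i) w" by simp
      have "(g ^^ Suc (Suc i)) x = g ((g ^^ Suc i) x)" by simp
      also have "\<dots> = f ((f ^^ Suc i) w)" using eq tw gapp by simp
      also have "\<dots> = (f ^^ Suc (Suc i)) w" by simp
      finally have "(g ^^ Suc (Suc i)) x = (f ^^ Suc (Suc i)) w" .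
      then show ?thesis by blast
    qed
  qed
  obtain n where n: "0 < n" "(f ^^ n) w = w"
    using orbit_self[OF assms(1), of w] by (auto simp: orbit_altdef)
  then obtain i where "n = Suc i" by (cases n) auto
  then have "w \<in> orbit g x" using claim[of i] n funpow_Suc_orbit[of i g x] by auto
  then show ?thesis by (simp add: g_def)
qed

lemma MC:
  assumes "f permutes D" "finite D" "x \<in> D" "w \<in> D" "w \<notin> orbit f x"
  shows "ncyc (f \<circ> Transposition.transpose x w) D + 1 = ncyc f D"
proof -
  let ?g = "f \<circ> Transposition.transpose x w"
  have pf: "permutation f" using assms perm_fin by blast
  have gp: "?g permutes D" using assms by (intro permutes_compose permutes_swap_id)
  then have pg: "permutation ?g" using assms perm_fin by blast
  have "w \<in> orbit ?g x" using merge_reach[OF pf assms(5)] .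
  then have "orbit ?g w = orbit ?g x" using orbit_same[OF pg] by metis
  then have c1: "card {orbit ?g x, orbit ?g w} = 1" by simp
  have "orbit f x \<noteq> orbit f w" using assms(5) orbit_self[OF pf, of w] by metis
  then have c2: "card {orbit f x, orbit f w} = 2" by simp
  show ?thesis using ncyc_split[OF gp assms(2-4)] ncyc_split[OF assms(1-4)] out_eq[OF assms(1-4)] c1 c2
    by simp
qed

lemma E1:
  assumes "f permutes D" "finite D" "x \<in> D" "w \<in> D"
  shows "ncyc f D \<le> ncyc (f \<circ> Transposition.transpose x w) D + 1"
proof -
  let ?g = "f \<circ> Transposition.transpose x w"
  have gp: "?g permutes D" using assms by (intro permutes_compose permutes_swap_id)
  have "card {orbit f x, orbit f w} \<le> 2" by (simp add: card_insert_le_m1)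
  moreover have "card {orbit ?g x, orbit ?g w} \<ge> 1" by (cases "orbit ?g x = orbit ?g w") auto
  ultimately show ?thesis using ncyc_split[OF gp assms(2-4)] ncyc_split[OF assms(1-4)] out_eq[OF assms(1-4)]
    by simp
qed




definition cls :: "('a \<times> 'a) set \<Rightarrow> 'a \<Rightarrow> 'a set" where
  "cls R y = {z. (y, z) \<in> R\<^sup>*}"

definition cedges :: "('a \<Rightarrow> 'a) \<Rightarrow> ('a \<Rightarrow> 'a) \<Rightarrow> 'a set \<Rightarrow> ('a \<times> 'a) set" where
  "cedges a b D = {(z, a z) | z. z \<in> D} \<union> {(a z, z) | z. z \<in> D} \<union>
                  {(z, b z) | z. z \<in> D} \<union> {(b z, z) | z. z \<in> D}"

definition ncomp :: "('a \<Rightarrow> 'a) \<Rightarrow> ('a \<Rightarrow> 'a) \<Rightarrow> 'a set \<Rightarrow> nat" where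
  "ncomp a b D = card (cls (cedges a b D) ` D)"

lemma sym_cedges: "sym (cedges a b D)"
  unfolding cedges_def sym_def by blast

lemma cls_eq:
  assumes "sym E" "z \<in> cls E y" shows "cls E z = cls E y"
proof -
  have s: "sym (E\<^sup>*)" using assms(1) by (rule sym_rtrancl)
  have "(y,z) \<in> E\<^sup>*" using assms(2) by (simp add: cls_def)
  moreover then have "(z,y) \<in> E\<^sup>*" using s by (meson symD)
  ultimately show ?thesis unfolding cls_def by (auto intro: rtrancl_trans)
qed

lemma cls_self: "y \<in> cls E y" by (simp add: cls_def)

lemma CL:
  assumes symE: "sym E" and fin: "finite D" and xD: "x \<in> D" and wD: "w \<in> D"
  shows "card (cls E ` D) \<le> card (cls (E \<union> {(x,w),(w,x)}) ` D) + 1"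
proof -
  let ?F = "E \<union> {(x,w),(w,x)}"
  let ?Kx = "cls E x" and ?Kw = "cls E w"
  have sR: "sym (E\<^sup>*)" using symE by (rule sym_rtrancl)
  have symF: "sym ?F" using symE unfolding sym_def by blast
  define Q where "Q = {(y,z). (y,z) \<in> E\<^sup>* \<or> (y \<in> ?Kx \<union> ?Kw \<and> z \<in> ?Kx \<union> ?Kw)}"
  have FQ: "(y,z) \<in> ?F\<^sup>* \<Longrightarrow> (y,z) \<in> Q" for y z
  proof (induction rule: rtrancl_induct)
    case base then show ?case by (simp add: Q_def)
  next
    case (step z z')
    show ?case
    proof (cases "(z,z') \<in> E")
      case True
      have "z \<in> ?Kx \<Longrightarrow> z' \<in> ?Kx" "z \<in> ?Kw \<Longrightarrow> z' \<in> ?Kw" using True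
        by (auto simp: cls_def intro: rtrancl_into_rtrancl)
      then show ?thesis using step.IH True unfolding Q_def
        by (auto intro: rtrancl_into_rtrancl)
    next
      case False
      then have zz: "(z = x \<and> z' = w) \<or> (z = w \<and> z' = x)" using step.hyps(2) by auto
      have yin: "y \<in> ?Kx \<union> ?Kw"
        using step.IH zz unfolding Q_def cls_def by (auto dest: symD[OF sR])
      show ?thesis using yin zz unfolding Q_def by (auto simp: cls_self)
    qed
  qed
  have EF: "E\<^sup>* \<subseteq> ?F\<^sup>*" by (rule rtrancl_mono) blast
  define h where "h C = \<Union> (cls ?F ` C)" for C
  have h_eq: "h (cls E y) = cls ?F y" for y
  proof -
    have "cls ?F z = cls ?F y" if "z \<in> cls E y" for z
    proof -
      have "z \<in> cls ?F y" using that EF unfolding cls_def by blast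
      then show ?thesis by (rule cls_eq[OF symF])
    qed
    then have "\<forall>z\<in>cls E y. cls ?F z = cls ?F y" by blast
    moreover have "y \<in> cls E y" by (rule cls_self)
    ultimately have "cls ?F ` cls E y = {cls ?F y}" by blast
    then show ?thesis unfolding h_def by simp
  qed
  have inj: "inj_on h (cls E ` D - {?Kx})"
  proof (rule inj_onI)
    fix C1 C2 assume C1: "C1 \<in> cls E ` D - {?Kx}" and C2: "C2 \<in> cls E ` D - {?Kx}" and eq: "h C1 = h C2"
    obtain y1 where y1: "y1 \<in> D" "C1 = cls E y1" using C1 by auto
    obtain y2 where y2: "y2 \<in> D" "C2 = cls E y2" using C2 by auto
    have "cls ?F y1 = cls ?F y2" using eq y1 y2 h_eq by simp
    then have "y2 \<in> cls ?F y1" using cls_self[of y2 ?F] by simp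
    then have F12: "(y1,y2) \<in> ?F\<^sup>*" by (simp add: cls_def)
    then have Q12: "(y1,y2) \<in> Q" by (rule FQ)
    show "C1 = C2"
    proof (cases "(y1,y2) \<in> E\<^sup>*")
      case True then show ?thesis using y1 y2 cls_eq[OF symE, of y2 y1] by (simp add: cls_def)
    next
      case False
      then have u: "y1 \<in> ?Kx \<union> ?Kw" "y2 \<in> ?Kx \<union> ?Kw" using Q12 by (auto simp: Q_def)
      have n: "cls E y1 \<noteq> ?Kx" "cls E y2 \<noteq> ?Kx" using C1 C2 y1 y2 by auto
      have "y1 \<in> ?Kw" using u(1) n(1) cls_eq[OF symE, of y1 x] by blast
      moreover have "y2 \<in> ?Kw" using u(2) n(2) cls_eq[OF symE, of y2 x] by blast
      ultimately have "y1 \<in> ?Kw" "y2 \<in> ?Kw" by blast+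
      then show ?thesis using y1(2) y2(2) cls_eq[OF symE, of y1 w] cls_eq[OF symE, of y2 w] by simp
    qed
  qed
  have "card (cls E ` D) \<le> card (cls E ` D - {?Kx}) + 1"
    using card_Diff_singleton_if[of "cls E ` D" ?Kx]
    by (cases "?Kx \<in> cls E ` D") auto
  also have "card (cls E ` D - {?Kx}) = card (h ` (cls E ` D - {?Kx}))"
    using inj by (simp add: card_image)
  also have "h ` (cls E ` D - {?Kx}) \<subseteq> cls ?F ` D" using h_eq by auto
  then have "card (h ` (cls E ` D - {?Kx})) \<le> card (cls ?F ` D)"
    by (intro card_mono) (auto simp: fin)
  finally show ?thesis by simp
qed

lemma CL_eq:
  assumes "(x,w) \<in> E\<^sup>*" "sym E"
  shows "(E \<union> {(x,w),(w,x)})\<^sup>* = E\<^sup>*"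
proof
  have "(w,x) \<in> E\<^sup>*" using assms sym_rtrancl by (metis symD)
  then have "E \<union> {(x,w),(w,x)} \<subseteq> E\<^sup>*" using assms by auto
  then show "(E \<union> {(x,w),(w,x)})\<^sup>* \<subseteq> E\<^sup>*" by (metis rtrancl_subset_rtrancl)
next
  show "E\<^sup>* \<subseteq> (E \<union> {(x,w),(w,x)})\<^sup>*" by (rule rtrancl_mono) blast
qed




lemma base_case:
  assumes "a permutes D" "finite D"
  shows "ncomp a id D = ncyc a D"
proof -
  have pa: "permutation a" using assms perm_fin by blast
  have "cls (cedges a id D) y = orbit a y" if yD: "y \<in> D" for y
  proof
    show "cls (cedges a id D) y \<subseteq> orbit a y"
    proof
      fix z assume "z \<in> cls (cedges a id D) y"
      then have "(y,z) \<in> (cedges a id D)\<^sup>*" by (simp add: cls_def)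
      then show "z \<in> orbit a y"
      proof (induction rule: rtrancl_induct)
        case base then show ?case using pa by (rule orbit_self)
      next
        case (step z z')
        then consider "z' = a z" | "z = a z'" | "z' = z"
          by (auto simp: cedges_def)
        then show ?case
        proof cases
          case 1 then show ?thesis using step.IH by (auto intro: orbit.intros)
        next
          case 2
          have "orbit a z = orbit a y" using orbit_same[OF pa step.IH] .
          moreover have "orbit a z = orbit a z'" using 2 permutation_orbit_step[OF pa] by simp
          ultimately show ?thesis using orbit_self[OF pa, of z'] by simp
        next
          case 3 then show ?thesis using step.IH by simp
        qed
      qed
    qed
  next
    show "orbit a y \<subseteq> cls (cedges a id D) y"
    proof
      fix z assume "z \<in> orbit a y"
      then show "z \<in> cls (cedges a id D) y"
      proof (induction rule: orbit.induct)
        case base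
        have "(y, a y) \<in> cedges a id D" using yD by (auto simp: cedges_def)
        then show ?case unfolding cls_def by (blast intro: r_into_rtrancl)
      next
        case (step z)
        have "z \<in> D" using permutes_orbit_subset[OF assms(1) yD] step.hyps by auto
        then have "(z, a z) \<in> cedges a id D" by (auto simp: cedges_def)
        then show ?case using step.IH unfolding cls_def by (blast intro: rtrancl_into_rtrancl)
      qed
    qed
  qed
  then have "cls (cedges a id D) ` D = orbit a ` D" by (rule image_cong[OF refl])
  then show ?thesis by (simp add: ncomp_def ncyc_def)
qed

lemma ncyc_id: "ncyc id D = card D"
proof -
  have "orbit id y = {y}" for y :: 'a by (simp add: orbit_eq_singleton_iff)
  then have "orbit id ` D = (\<lambda>y. {y}) ` D" by simp
  then show ?thesis by (simp add: ncyc_def card_image)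
qed

theorem euler_perm:
  assumes "finite D" "a permutes D" "b permutes D"
  shows "ncyc a D + ncyc b D + ncyc (a \<circ> b) D \<le> card D + 2 * ncomp a b D"
  using assms(3)
proof (induction "card {z \<in> D. b z \<noteq> z}" arbitrary: b rule: less_induct)
  case less
  show ?case
  proof (cases "\<exists>x\<in>D. b x \<noteq> x")
    case False
    then have "b = id" using less.prems permutes_not_in[OF less.prems] by (auto simp: fun_eq_iff)
    then show ?thesis using base_case[OF assms(2,1)] by (simp add: ncyc_id)
  next
    case True
    then obtain x where xD: "x \<in> D" and bx: "b x \<noteq> x" by blast
    define w where "w = inv b x"
    have bw: "b w = x" using permutes_inverses(1)[OF less.prems] by (simp add: w_def)
    have wD: "w \<in> D" using permutes_in_image[OF permutes_inv[OF less.prems]] xD by (simp add: w_def)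
    have wx: "w \<noteq> x" using bw bx by auto
    define \<tau> where "\<tau> = Transposition.transpose x w"
    define b' where "b' = b \<circ> \<tau>"
    have b'p: "b' permutes D" unfolding b'_def \<tau>_def
      using less.prems xD wD by (intro permutes_compose permutes_swap_id)
    have b'x: "b' x = x" by (simp add: b'_def \<tau>_def bw)
    have b'w: "b' w = b x" by (simp add: b'_def \<tau>_def)
    have b'o: "b' z = b z" if "z \<noteq> x" "z \<noteq> w" for z using that by (simp add: b'_def \<tau>_def)
    have sub: "{z \<in> D. b' z \<noteq> z} \<subset> {z \<in> D. b z \<noteq> z}"
    proof
      show "{z \<in> D. b' z \<noteq> z} \<subseteq> {z \<in> D. b z \<noteq> z}"
      proof (rule subsetI)
        fix z assume z: "z \<in> {z \<in> D. b' z \<noteq> z}"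
        show "z \<in> {z \<in> D. b z \<noteq> z}"
        proof (cases "z = x \<or> z = w")
          case True then show ?thesis using z b'x bw wx bx by auto
        next
          case False then show ?thesis using z b'o by auto
        qed
      qed
      show "{z \<in> D. b' z \<noteq> z} \<noteq> {z \<in> D. b z \<noteq> z}" using b'x xD bx by auto
    qed
    have lt: "card {z \<in> D. b' z \<noteq> z} < card {z \<in> D. b z \<noteq> z}"
      using sub assms(1) by (intro psubset_card_mono) auto
    have IH: "ncyc a D + ncyc b' D + ncyc (a \<circ> b') D \<le> card D + 2 * ncomp a b' D"
      using less.hyps[OF lt b'p] .
    have IH': "ncyc a D + ncyc b' D + ncyc (a \<circ> b') D \<le> card D + 2 * ncomp a b' D" using IH .
    have bb: "b = b' \<circ> \<tau>" by (simp add: b'_def \<tau>_def tt)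
    have "orbit b' x = {x}" using b'x by (simp add: orbit_eq_singleton_iff)
    then have "w \<notin> orbit b' x" using wx by simp
    then have cb: "ncyc b D + 1 = ncyc b' D"
      using MC[OF b'p assms(1) xD wD] bb by (simp add: \<tau>_def)
    define \<rho> where "\<rho> = a \<circ> b'"
    have \<rho>p: "\<rho> permutes D" unfolding \<rho>_def using b'p assms(2) by (rule permutes_compose)
    have ab: "a \<circ> b = \<rho> \<circ> \<tau>" by (simp add: bb \<rho>_def comp_assoc)
    let ?E = "cedges a b D" and ?E' = "cedges a b' D"
    have e1: "(w, b x) \<in> ?E'" "(b x, w) \<in> ?E'"
    proof -
      have "(w, b' w) \<in> ?E'" "(b' w, w) \<in> ?E'" using wD unfolding cedges_def by blast+
      then show "(w, b x) \<in> ?E'" "(b x, w) \<in> ?E'" by (simp_all add: b'w)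
    qed
    have e3: "(w, x) \<in> ?E" "(x, w) \<in> ?E" "(x, b x) \<in> ?E" "(b x, x) \<in> ?E"
    proof -
      have "(w, b w) \<in> ?E" "(b w, w) \<in> ?E" "(x, b x) \<in> ?E" "(b x, x) \<in> ?E"
        using wD xD unfolding cedges_def by blast+
      then show "(w, x) \<in> ?E" "(x, w) \<in> ?E" "(x, b x) \<in> ?E" "(b x, x) \<in> ?E" by (simp_all add: bw)
    qed
    have Ecl: "?E\<^sup>* = (?E' \<union> {(x,w),(w,x)})\<^sup>*"
    proof
      have "?E \<subseteq> (?E' \<union> {(x,w),(w,x)})\<^sup>*"
      proof
        fix p assume "p \<in> ?E"
        then consider z where "z \<in> D" "p = (z, a z)" | z where "z \<in> D" "p = (a z, z)"
          | z where "z \<in> D" "p = (z, b z)" | z where "z \<in> D" "p = (b z, z)"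
          unfolding cedges_def by blast
        then show "p \<in> (?E' \<union> {(x,w),(w,x)})\<^sup>*"
        proof cases
          case 1 then show ?thesis by (auto simp: cedges_def)
        next
          case 2 then show ?thesis by (auto simp: cedges_def)
        next
          case (3 z)
          show ?thesis
          proof (cases "z = x")
            case True
            have "(x, w) \<in> ?E' \<union> {(x,w),(w,x)}" by simp
            moreover have "(w, b x) \<in> ?E' \<union> {(x,w),(w,x)}" using e1 by blast
            ultimately show ?thesis using 3 True by (meson converse_rtrancl_into_rtrancl r_into_rtrancl)
          next
            case False
            show ?thesis
            proof (cases "z = w")
              case True then show ?thesis using 3 bw by auto
            next
              case False
              then have "p \<in> ?E'" using 3 \<open>z \<noteq> x\<close> b'o unfolding cedges_def by force
              then show ?thesis by auto
            qed
          qed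
        next
          case (4 z)
          show ?thesis
          proof (cases "z = x")
            case True
            have "(w, x) \<in> ?E' \<union> {(x,w),(w,x)}" by simp
            moreover have "(b x, w) \<in> ?E' \<union> {(x,w),(w,x)}" using e1 by blast
            ultimately show ?thesis using 4 True by (meson converse_rtrancl_into_rtrancl r_into_rtrancl)
          next
            case False
            show ?thesis
            proof (cases "z = w")
              case True then show ?thesis using 4 bw by auto
            next
              case False
              then have "p \<in> ?E'" using 4 \<open>z \<noteq> x\<close> b'o unfolding cedges_def by force
              then show ?thesis by auto
            qed
          qed
        qed
      qed
      then show "?E\<^sup>* \<subseteq> (?E' \<union> {(x,w),(w,x)})\<^sup>*" by (metis rtrancl_subset_rtrancl)
    next
      have "?E' \<union> {(x,w),(w,x)} \<subseteq> ?E\<^sup>*"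
      proof
        fix p assume "p \<in> ?E' \<union> {(x,w),(w,x)}"
        then consider z where "z \<in> D" "p = (z, a z)" | z where "z \<in> D" "p = (a z, z)"
          | z where "z \<in> D" "p = (z, b' z)" | z where "z \<in> D" "p = (b' z, z)" | "p = (x,w)" | "p = (w,x)"
          unfolding cedges_def by blast
        then show "p \<in> ?E\<^sup>*"
        proof cases
          case 1 then show ?thesis by (auto simp: cedges_def)
        next
          case 2 then show ?thesis by (auto simp: cedges_def)
        next
          case (3 z)
          show ?thesis
          proof (cases "z = x")
            case True then show ?thesis using 3 b'x by simp
          next
            case False
            show ?thesis
            proof (cases "z = w")
              case True
              have "(w, x) \<in> ?E" using e3 by blast
              moreover have "(x, b x) \<in> ?E" using e3 by blast
              ultimately have "(w, b x) \<in> ?E\<^sup>*" by (meson converse_rtrancl_into_rtrancl r_into_rtrancl)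
              then show ?thesis using 3 True b'w by simp
            next
              case False
              then have "p \<in> ?E" using 3 \<open>z \<noteq> x\<close> b'o unfolding cedges_def by force
              then show ?thesis by auto
            qed
          qed
        next
          case (4 z)
          show ?thesis
          proof (cases "z = x")
            case True then show ?thesis using 4 b'x by simp
          next
            case False
            show ?thesis
            proof (cases "z = w")
              case True
              have "(x, w) \<in> ?E" using e3 by blast
              moreover have "(b x, x) \<in> ?E" using e3 by blast
              ultimately have "(b x, w) \<in> ?E\<^sup>*" by (meson converse_rtrancl_into_rtrancl r_into_rtrancl)
              then show ?thesis using 4 True b'w by simp
            next
              case False
              then have "p \<in> ?E" using 4 \<open>z \<noteq> x\<close> b'o unfolding cedges_def by force
              then show ?thesis by auto
            qed
          qed
        next
          case 5
          have "(x, w) \<in> ?E" using e3 by blast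
          then show ?thesis using 5 by auto
        next
          case 6
          have "(w, x) \<in> ?E" using e3 by blast
          then show ?thesis using 6 by auto
        qed
      qed
      then show "(?E' \<union> {(x,w),(w,x)})\<^sup>* \<subseteq> ?E\<^sup>*" by (metis rtrancl_subset_rtrancl)
    qed
    have clsE: "cls ?E = cls (?E' \<union> {(x,w),(w,x)})" by (simp add: cls_def fun_eq_iff Ecl)
    show ?thesis
    proof (cases "w \<in> orbit \<rho> x")
      case False
      have "ncyc (\<rho> \<circ> \<tau>) D + 1 = ncyc \<rho> D"
        using MC[OF \<rho>p assms(1) xD wD False] by (simp add: \<tau>_def)
      moreover have "ncomp a b' D \<le> ncomp a b D + 1"
        unfolding ncomp_def clsE using CL[OF sym_cedges assms(1) xD wD] .
      ultimately show ?thesis using IH' cb ab unfolding \<rho>_def by simp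
    next
      case True
      have "ncyc \<rho> D \<le> ncyc (\<rho> \<circ> \<tau>) D + 1"
        using E1[OF \<rho>p assms(1) xD wD] by (simp add: \<tau>_def)
      have t1: "ncyc (\<rho> \<circ> \<tau>) D \<le> ncyc (\<rho> \<circ> \<tau> \<circ> \<tau>) D + 1"
        using E1[OF permutes_compose[OF permutes_swap_id[OF xD wD] \<rho>p] assms(1) xD wD] by (simp add: \<tau>_def)
      then have t2: "ncyc (\<rho> \<circ> \<tau>) D \<le> ncyc \<rho> D + 1" by (simp add: \<tau>_def tt)
      have "(x, z) \<in> ?E'\<^sup>*" if "z \<in> orbit \<rho> x" for z
        using that
      proof (induction rule: orbit.induct)
        case base
        have "(x, b' x) \<in> ?E'" "(b' x, a (b' x)) \<in> ?E'"
          using xD permutes_in_image[OF b'p] unfolding cedges_def by blast+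
        then show ?case by (simp add: \<rho>_def)
      next
        case (step z)
        have "z \<in> D" using permutes_orbit_subset[OF \<rho>p xD] step.hyps by auto
        then have "(z, b' z) \<in> ?E'" "(b' z, a (b' z)) \<in> ?E'"
          using permutes_in_image[OF b'p] unfolding cedges_def by blast+
        then show ?case using step.IH unfolding \<rho>_def comp_apply by (meson rtrancl_into_rtrancl)
      qed
      then have "(x,w) \<in> ?E'\<^sup>*" using True by blast
      then have "(?E' \<union> {(x,w),(w,x)})\<^sup>* = ?E'\<^sup>*" by (rule CL_eq[OF _ sym_cedges])
      then have "cls ?E = cls ?E'" using clsE by (simp add: cls_def fun_eq_iff)
      then have "ncomp a b D = ncomp a b' D" by (simp add: ncomp_def)
      then show ?thesis using IH' cb ab t2 unfolding \<rho>_def by simp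
    qed
  qed
qed




locale avd =
  fixes G :: "('v, 'd) pmap" and S :: "'v site set"
  assumes plane: "plane_map G"
    and conn: "connected_map G"
    and nn: "no_neg_cycles G"
    and usp: "unique_shortest_paths G"
    and finS: "finite S" and c3: "card S = 3"
    and gen: "generic G S"
    and ind: "independent G S"
    and sites: "\<forall>s\<in>S. fst s \<in> verts G \<and> on_outer_face G (fst s)"
begin

lemma dart_props:
  assumes "d \<in> darts G"
  shows "tl_of G d \<in> verts G" "hd_of G d \<in> verts G" "rv G d \<in> darts G"
    "rv G (rv G d) = d" "rv G d \<noteq> d" "tl_of G (rv G d) = hd_of G d" "hd_of G (rv G d) = tl_of G d"
proof -
  have A: "\<forall>d\<in>darts G. tl_of G d \<in> verts G \<and> hd_of G d \<in> verts G \<and> rv G d \<in> darts G \<and>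
                    rv G (rv G d) = d \<and> rv G d \<noteq> d \<and> hd_of G d = tl_of G (rv G d)"
    using plane unfolding plane_map_def by blast
  show "tl_of G d \<in> verts G" "hd_of G d \<in> verts G" "rv G d \<in> darts G"
    "rv G (rv G d) = d" "rv G d \<noteq> d" "tl_of G (rv G d) = hd_of G d" using A assms by auto
  have "hd_of G (rv G d) = tl_of G (rv G (rv G d))" using A assms by auto
  then show "hd_of G (rv G d) = tl_of G d" using A assms by auto
qed

lemma finV: "finite (verts G)" and finD: "finite (darts G)"
  using plane unfolding plane_map_def by auto

lemma rot_bij: "bij_betw (rot G) (darts G) (darts G)"
  using plane unfolding plane_map_def by auto

lemma rot_orbit: "d \<in> darts G \<Longrightarrow> {(rot G ^^ n) d | n. True} = {d'\<in>darts G. tl_of G d' = tl_of G d}"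
  using plane unfolding plane_map_def by auto

lemma euler: "2 * int (card (verts G)) - int (card (darts G)) + 2 * int (card (faces G)) = 4"
  using plane unfolding plane_map_def by auto

lemma outer_face: "outer G \<in> faces G"
  using plane unfolding plane_map_def by auto

lemma walk_verts: "is_walk G u ds x \<Longrightarrow> u \<in> verts G \<and> x \<in> verts G"
  by (induction ds arbitrary: u) (auto dest: dart_props)

lemma walk_append: "is_walk G u (xs @ ys) x \<longleftrightarrow> (\<exists>y. is_walk G u xs y \<and> is_walk G y ys x)"
  by (induction xs arbitrary: u) (auto dest: walk_verts)

lemma walk_end_unique: "is_walk G u ds x \<Longrightarrow> is_walk G u ds y \<Longrightarrow> x = y"
  by (induction ds arbitrary: u) auto

lemma walk_len_append: "walk_len G (xs @ ys) = walk_len G xs + walk_len G ys"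
  by (simp add: walk_len_def)

lemma walk_len_Cons: "walk_len G (d # ys) = len G d + walk_len G ys"
  by (simp add: walk_len_def)

lemma dist_le:
  assumes "is_walk G u W x" shows "dist G u x \<le> walk_len G W"
proof -
  have uv: "u \<in> verts G" "x \<in> verts G" using walk_verts[OF assms] by auto
  obtain R where R: "is_walk G x R u" using conn uv unfolding connected_map_def by blast
  have "bdd_below {walk_len G ds | ds. is_walk G u ds x}"
  proof (rule bdd_belowI)
    fix l assume "l \<in> {walk_len G ds | ds. is_walk G u ds x}"
    then obtain ds where ds: "l = walk_len G ds" "is_walk G u ds x" by auto
    then have "is_walk G u (ds @ R) u" using R walk_append by blast
    then have "walk_len G (ds @ R) \<ge> 0" using nn unfolding no_neg_cycles_def by blast
    then show "- walk_len G R \<le> l" using ds by (simp add: walk_len_append)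
  qed
  then show ?thesis unfolding dist_def using assms by (auto intro: cInf_lower)
qed

lemma dist_attained:
  assumes "u \<in> verts G" "x \<in> verts G"
  obtains P where "is_walk G u P x" "walk_len G P = dist G u x"
  using usp assms unfolding unique_shortest_paths_def is_path_def by blast

abbreviation wd :: "'v site \<Rightarrow> 'v \<Rightarrow> real" where
  "wd s x \<equiv> snd s + dist G (fst s) x"

lemma cell_alt: "cell G s S = {x \<in> verts G. \<forall>t\<in>S - {s}. wd s x \<le> wd t x}"
  by (simp add: cell_def)

lemma site_vert: "s \<in> S \<Longrightarrow> fst s \<in> verts G"
  using sites by auto

lemma lab_ex:
  assumes "x \<in> verts G" shows "\<exists>s\<in>S. x \<in> cell G s S"
proof -
  have ne: "S \<noteq> {}" using c3 by auto
  let ?m = "Min ((\<lambda>s. wd s x) ` S)"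
  have "?m \<in> (\<lambda>s. wd s x) ` S" using finS ne by (intro Min_in) auto
  then obtain s where s: "s \<in> S" "wd s x = ?m" by auto
  have h: "\<forall>t\<in>S. wd s x \<le> wd t x"
  proof
    fix t assume "t \<in> S"
    then have "?m \<le> wd t x" using finS by (intro Min_le) auto
    then show "wd s x \<le> wd t x" using s(2) by simp
  qed
  have "x \<in> cell G s S" unfolding cell_alt using h assms by blast
  then show ?thesis using s by blast
qed

lemma cell_strict:
  assumes "s \<in> S" "t \<in> S" "t \<noteq> s" "x \<in> cell G s S" shows "wd s x < wd t x"
proof -
  have "wd s x \<le> wd t x" "x \<in> verts G" using assms by (auto simp: cell_alt)
  moreover have "wd s x \<noteq> wd t x" using gen assms \<open>x \<in> verts G\<close> unfolding generic_def by metis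
  ultimately show ?thesis by simp
qed

lemma cell_unique:
  assumes "s \<in> S" "t \<in> S" "x \<in> cell G s S" "x \<in> cell G t S" shows "s = t"
  using cell_strict[OF assms(1,2) _ assms(3)] cell_strict[OF assms(2,1) _ assms(4)] by fastforce

definition lab :: "'v \<Rightarrow> 'v site" where
  "lab x = (THE s. s \<in> S \<and> x \<in> cell G s S)"

lemma lab_in: assumes "x \<in> verts G" shows "lab x \<in> S" "x \<in> cell G (lab x) S"
proof -
  obtain s where s: "s \<in> S" "x \<in> cell G s S" using lab_ex[OF assms] by blast
  have "lab x = s" unfolding lab_def using s cell_unique by blast
  then show "lab x \<in> S" "x \<in> cell G (lab x) S" using s by auto
qed

lemma lab_eq: "s \<in> S \<Longrightarrow> x \<in> cell G s S \<Longrightarrow> lab x = s"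
  using lab_in cell_unique by (metis (no_types, lifting) cell_def mem_Collect_eq)

lemma cell_verts: "x \<in> cell G s S \<Longrightarrow> x \<in> verts G"
  by (simp add: cell_def)

lemma path_in_cell:
  assumes sS: "s \<in> S" and xc: "x \<in> cell G s S" and P: "is_walk G (fst s) (P1 @ P2) x"
    and Pl: "walk_len G (P1 @ P2) = dist G (fst s) x" and P1: "is_walk G (fst s) P1 y"
  shows "y \<in> cell G s S"
proof -
  have P2: "is_walk G y P2 x" using P P1 walk_append walk_end_unique by metis
  have yv: "y \<in> verts G" using walk_verts[OF P1] by auto
  have xv: "x \<in> verts G" using xc cell_verts by blast
  have "wd s y \<le> wd t y" if tS: "t \<in> S - {s}" for t
  proof -
    obtain Q where Q: "is_walk G (fst t) Q y" "walk_len G Q = dist G (fst t) y"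
      using dist_attained[OF site_vert yv] tS by blast
    have "is_walk G (fst t) (Q @ P2) x" using Q P2 walk_append by blast
    then have dt: "dist G (fst t) x \<le> dist G (fst t) y + walk_len G P2"
      using dist_le Q by (fastforce simp: walk_len_append)
    have ds: "dist G (fst s) y \<le> walk_len G P1" using dist_le P1 by blast
    have "wd s x \<le> wd t x" using xc tS by (auto simp: cell_alt)
    then show ?thesis using dt ds Pl by (simp add: walk_len_append)
  qed
  then show ?thesis using yv by (simp add: cell_alt)
qed

lemma cell_walk:
  assumes sS: "s \<in> S" and xc: "x \<in> cell G s S"
  obtains P where "is_walk G (fst s) P x" "\<forall>d\<in>set P. tl_of G d \<in> cell G s S \<and> hd_of G d \<in> cell G s S"
    "fst s \<in> cell G s S"
proof -
  have xv: "x \<in> verts G" using xc cell_verts by blast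
  obtain P where P: "is_walk G (fst s) P x" "walk_len G P = dist G (fst s) x"
    using dist_attained[OF site_vert[OF sS] xv] by blast
  have "tl_of G d \<in> cell G s S \<and> hd_of G d \<in> cell G s S" if "d \<in> set P" for d
  proof -
    obtain P1 P2 where sp: "P = P1 @ d # P2" using \<open>d \<in> set P\<close> by (meson split_list)
    then obtain y where y: "is_walk G (fst s) P1 y" "is_walk G y (d # P2) x"
      using P walk_append by blast
    have "is_walk G (fst s) (P1 @ [d]) (hd_of G d)"
      using y walk_append walk_verts by (auto dest: dart_props)
    then have "hd_of G d \<in> cell G s S"
      using path_in_cell[OF sS xc, of "P1 @ [d]" P2] P sp by simp
    moreover have "tl_of G d \<in> cell G s S"
      using path_in_cell[OF sS xc, of P1 "d # P2" y] P sp y by simp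
    ultimately show ?thesis by simp
  qed
  moreover have "fst s \<in> cell G s S"
    using path_in_cell[OF sS xc, of "[]" P "fst s"] P site_vert[OF sS] by simp
  ultimately show ?thesis using that P by blast
qed

lemma site_in_cell: "s \<in> S \<Longrightarrow> fst s \<in> cell G s S"
proof -
  assume sS: "s \<in> S"
  then obtain x where "x \<in> cell G s S" using ind unfolding independent_def by blast
  then obtain P where "fst s \<in> cell G s S" using cell_walk[OF sS] by blast
  then show ?thesis .
qed

lemma lab_site: "s \<in> S \<Longrightarrow> lab (fst s) = s"
  using lab_eq site_in_cell by blast

end



context avd begin

lemma GD_alt: "s \<noteq> t \<Longrightarrow> GD G s t = {x \<in> verts G. wd s x \<le> wd t x}"
proof -
  assume "s \<noteq> t"
  then have "{s,t} - {s} = {t}" by auto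
  then show ?thesis by (simp add: GD_def cell_def)
qed

lemma GD_disj:
  assumes "s \<in> S" "t \<in> S" "s \<noteq> t" "x \<in> GD G s t" "x \<in> GD G t s" shows False
proof -
  have "wd s x = wd t x" "x \<in> verts G" using assms GD_alt[of s t] GD_alt[of t s] by auto
  then show False using gen assms unfolding generic_def by metis
qed

lemma GD_cover: "s \<noteq> t \<Longrightarrow> x \<in> verts G \<Longrightarrow> x \<in> GD G s t \<or> x \<in> GD G t s"
  using GD_alt[of s t] GD_alt[of t s] by auto

lemma cell_iff_GD: "s \<in> S \<Longrightarrow> x \<in> cell G s S \<longleftrightarrow> x \<in> verts G \<and> (\<forall>t\<in>S - {s}. x \<in> GD G s t)"
proof -
  have e: "t \<in> S - {s} \<Longrightarrow> x \<in> GD G s t \<longleftrightarrow> x \<in> verts G \<and> wd s x \<le> wd t x" for t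
    using GD_alt[of s t] by auto
  show ?thesis unfolding cell_alt using e by blast
qed

lemma cell_GD: "s \<in> S \<Longrightarrow> t \<in> S \<Longrightarrow> s \<noteq> t \<Longrightarrow> x \<in> cell G s S \<Longrightarrow> x \<in> GD G s t"
  using cell_iff_GD by blast

lemma not_bis:
  assumes "s \<in> S" "t \<in> S" "s \<noteq> t" "d \<in> darts G" "\<not> bis_dart G s t d" "tl_of G d \<in> GD G s t"
  shows "hd_of G d \<in> GD G s t"
proof (rule ccontr)
  assume "hd_of G d \<notin> GD G s t"
  then have "hd_of G d \<in> GD G t s" using GD_cover[OF assms(3) dart_props(2)[OF assms(4)]] by blast
  then have "bis_dart G s t d" unfolding bis_dart_def using assms(4,6) by blast
  then show False using assms(5) by blast
qed

lemma both_not_bis: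
  assumes "s \<in> S" "t \<in> S" "s \<noteq> t" "tl_of G d \<in> GD G s t" "hd_of G d \<in> GD G s t"
  shows "\<not> bis_dart G s t d"
  using assms GD_disj[OF assms(1-3)] GD_disj[OF assms(2,1)] unfolding bis_dart_def by blast

lemma side_sub:
  assumes "s \<in> S" "t \<in> S" "s \<noteq> t" shows "side G s t \<subseteq> GD G s t"
proof
  fix x assume "x \<in> side G s t"
  then obtain ds where ds: "is_walk G (fst s) ds x" "\<forall>d\<in>set ds. \<not> bis_dart G s t d"
    unfolding side_def by blast
  have "u \<in> GD G s t \<Longrightarrow> is_walk G u ds x \<Longrightarrow> \<forall>d\<in>set ds. \<not> bis_dart G s t d \<Longrightarrow> x \<in> GD G s t" for u
  proof (induction ds arbitrary: u)
    case Nil then show ?case by simp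
  next
    case (Cons d ds)
    have "hd_of G d \<in> GD G s t" using not_bis[OF assms, of d] Cons.prems by auto
    then show ?case using Cons by auto
  qed
  moreover have "fst s \<in> GD G s t"
    using site_in_cell[OF assms(1)] cell_iff_GD[OF assms(1)] assms by blast
  ultimately show "x \<in> GD G s t" using ds by blast
qed

lemma cell_side:
  assumes "s \<in> S" "t \<in> S" "s \<noteq> t" "x \<in> cell G s S" shows "x \<in> side G s t"
proof -
  obtain P where P: "is_walk G (fst s) P x" "\<forall>d\<in>set P. tl_of G d \<in> cell G s S \<and> hd_of G d \<in> cell G s S"
    "fst s \<in> cell G s S"
    using cell_walk[OF assms(1,4)] .
  have "\<forall>d\<in>set P. \<not> bis_dart G s t d"
  proof
    fix d assume "d \<in> set P"
    then have "tl_of G d \<in> GD G s t" "hd_of G d \<in> GD G s t"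
      using P(2) cell_GD[OF assms(1-3)] by auto
    then show "\<not> bis_dart G s t d" using both_not_bis[OF assms(1-3)] by blast
  qed
  then show ?thesis using P(1) unfolding side_def by blast
qed

lemma AVR_iff:
  assumes "d \<in> darts G" "s \<in> S"
  shows "dual_edge_in_AVR G S s d \<longleftrightarrow> tl_of G d \<in> cell G s S \<and> hd_of G d \<in> cell G s S"
proof
  assume A: "dual_edge_in_AVR G S s d"
  have "tl_of G d \<in> GD G s t \<and> hd_of G d \<in> GD G s t" if "t \<in> S - {s}" for t
  proof -
    have t: "t \<in> S" "s \<noteq> t" using that by auto
    have nb: "\<not> bis_dart G s t d" "tl_of G d \<in> side G s t"
      using A that unfolding dual_edge_in_AVR_def dual_edge_in_D_def by auto
    then have "tl_of G d \<in> GD G s t" using side_sub[OF assms(2) t] by blast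
    then show ?thesis using not_bis[OF assms(2) t assms(1) nb(1)] by blast
  qed
  then show "tl_of G d \<in> cell G s S \<and> hd_of G d \<in> cell G s S"
    using cell_iff_GD[OF assms(2)] dart_props[OF assms(1)] by blast
next
  assume B: "tl_of G d \<in> cell G s S \<and> hd_of G d \<in> cell G s S"
  show "dual_edge_in_AVR G S s d"
    unfolding dual_edge_in_AVR_def dual_edge_in_D_def
  proof
    fix t assume "t \<in> S - {s}"
    then have t: "t \<in> S" "s \<noteq> t" by auto
    show "\<not> bis_dart G s t d \<and> tl_of G d \<in> side G s t"
      using both_not_bis[OF assms(2) t] cell_side[OF assms(2) t] B cell_iff_GD[OF assms(2)] t
      by blast
  qed
qed

definition cross :: "'d \<Rightarrow> bool" where
  "cross d \<longleftrightarrow> lab (tl_of G d) \<noteq> lab (hd_of G d)"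

lemma AVD_edge_iff: "AVD_edge G S d \<longleftrightarrow> d \<in> darts G \<and> cross d"
proof
  assume A: "AVD_edge G S d"
  then have dD: "d \<in> darts G" by (simp add: AVD_edge_def)
  let ?s = "lab (tl_of G d)"
  have sS: "?s \<in> S" "tl_of G d \<in> cell G ?s S" using lab_in dart_props(1)[OF dD] by auto
  have "\<not> dual_edge_in_AVR G S ?s d" using A sS unfolding AVD_edge_def by blast
  then have "hd_of G d \<notin> cell G ?s S" using AVR_iff[OF dD sS(1)] sS by blast
  then have "lab (hd_of G d) \<noteq> ?s" using lab_in dart_props(2)[OF dD] by metis
  then show "d \<in> darts G \<and> cross d" using dD by (simp add: cross_def)
next
  assume B: "d \<in> darts G \<and> cross d"
  show "AVD_edge G S d" unfolding AVD_edge_def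
  proof (intro conjI ballI)
    show "d \<in> darts G" using B by simp
    fix s assume sS: "s \<in> S"
    show "\<not> dual_edge_in_AVR G S s d"
    proof
      assume "dual_edge_in_AVR G S s d"
      then have "tl_of G d \<in> cell G s S" "hd_of G d \<in> cell G s S" using AVR_iff B sS by auto
      then have "lab (tl_of G d) = s" "lab (hd_of G d) = s" using lab_eq sS by auto
      then show False using B by (simp add: cross_def)
    qed
  qed
qed

end



context avd begin

abbreviation "D \<equiv> darts G"

definition aP :: "'d \<Rightarrow> 'd" where "aP d = (if d \<in> D then rot G d else d)"
definition rP :: "'d \<Rightarrow> 'd" where "rP d = (if d \<in> D then rv G d else d)"
definition bP :: "'d \<Rightarrow> 'd" where "bP d = (if d \<in> D \<and> \<not> cross d then rv G d else d)"
definition phi :: "'d \<Rightarrow> 'd" where "phi = aP \<circ> rP"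
definition psi :: "'d \<Rightarrow> 'd" where "psi = aP \<circ> bP"

lemma rot_props: assumes "d \<in> D" shows "rot G d \<in> D" "tl_of G (rot G d) = tl_of G d"
proof -
  have h: "rot G d \<in> {(rot G ^^ n) d | n. True}" by (intro CollectI exI[of _ "1::nat"]) simp
  have A: "{(rot G ^^ n) d | n. True} = {d'\<in>darts G. tl_of G d' = tl_of G d}" by (rule rot_orbit[OF assms])
  from h have "rot G d \<in> {d'\<in>darts G. tl_of G d' = tl_of G d}" unfolding A .
  then show "rot G d \<in> D" "tl_of G (rot G d) = tl_of G d" by auto
qed

lemma cross_rv: "d \<in> D \<Longrightarrow> cross (rv G d) \<longleftrightarrow> cross d"
  by (auto simp: cross_def dart_props)

lemma aP_perm: "aP permutes D"
proof (rule bij_imp_permutes)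
  show "bij_betw aP D D" using rot_bij by (rule bij_betw_cong[THEN iffD2, rotated]) (simp add: aP_def)
  show "\<And>x. x \<notin> D \<Longrightarrow> aP x = x" by (simp add: aP_def)
qed

lemma rP_perm: "rP permutes D"
proof (rule bij_imp_permutes)
  show "bij_betw rP D D"
    by (rule bij_betwI[where g = rP]) (auto simp: rP_def dart_props)
  show "\<And>x. x \<notin> D \<Longrightarrow> rP x = x" by (simp add: rP_def)
qed

lemma bP_perm: "bP permutes D"
proof (rule bij_imp_permutes)
  show "bij_betw bP D D"
    by (rule bij_betwI[where g = bP]) (auto simp: bP_def dart_props cross_rv)
  show "\<And>x. x \<notin> D \<Longrightarrow> bP x = x" by (simp add: bP_def)
qed

lemma phi_perm: "phi permutes D" unfolding phi_def by (rule permutes_compose[OF rP_perm aP_perm])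
lemma psi_perm: "psi permutes D" unfolding psi_def by (rule permutes_compose[OF bP_perm aP_perm])

lemma perm_phi: "permutation phi" using phi_perm finD perm_fin by blast
lemma perm_psi: "permutation psi" using psi_perm finD perm_fin by blast
lemma perm_aP: "permutation aP" using aP_perm finD perm_fin by blast
lemma perm_bP: "permutation bP" using bP_perm finD perm_fin by blast

lemma phi_eq: "d \<in> D \<Longrightarrow> phi d = face_perm G d"
  by (simp add: phi_def aP_def rP_def face_perm_def dart_props)

lemma psi_eq: "d \<in> D \<Longrightarrow> psi d = (if cross d then rot G d else face_perm G d)"
  by (simp add: psi_def aP_def bP_def face_perm_def dart_props)

lemma phi_D: "d \<in> D \<Longrightarrow> phi d \<in> D" using permutes_in_image[OF phi_perm] by simp

lemma phi_tl: "d \<in> D \<Longrightarrow> tl_of G (phi d) = hd_of G d"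
  by (simp add: phi_eq face_perm_def rot_props dart_props)

lemma face_perm_D: "d \<in> D \<Longrightarrow> face_perm G d \<in> D"
  using phi_D phi_eq by metis

lemma face_of_orbit: assumes "d \<in> D" shows "face_of G d = orbit phi d"
proof -
  have "(phi ^^ n) d = (face_perm G ^^ n) d \<and> (phi ^^ n) d \<in> D" for n
    by (induction n) (auto simp: assms phi_eq phi_D face_perm_D)
  then show ?thesis by (simp add: face_of_def orbit_altdef_permutation[OF perm_phi])
qed

lemma faces_orbits: "faces G = orbit phi ` D"
  unfolding faces_def using face_of_orbit by auto

lemma aP_orbit: assumes "d \<in> D" shows "orbit aP d = {d'\<in>D. tl_of G d' = tl_of G d}"
proof -
  have "(aP ^^ n) d = (rot G ^^ n) d \<and> (aP ^^ n) d \<in> D" for n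
    by (induction n) (auto simp: assms aP_def rot_props)
  then show ?thesis using rot_orbit[OF assms] by (simp add: orbit_altdef_permutation[OF perm_aP])
qed

lemma orbit_in_D: "f permutes D \<Longrightarrow> d \<in> D \<Longrightarrow> orbit f d \<subseteq> D"
  by (rule permutes_orbit_subset)

lemma D_ne: "D \<noteq> {}"
  using outer_face unfolding faces_def by auto

lemma vert_dart: assumes "v \<in> verts G" shows "\<exists>d\<in>D. tl_of G d = v"
proof -
  obtain d0 where d0: "d0 \<in> D" using D_ne by blast
  show ?thesis
  proof (cases "tl_of G d0 = v")
    case True then show ?thesis using d0 by blast
  next
    case False
    obtain ds where "is_walk G v ds (tl_of G d0)"
      using conn assms dart_props(1)[OF d0] unfolding connected_map_def by blast
    then show ?thesis using False by (cases ds) auto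
  qed
qed

lemma count_V: "card (verts G) \<le> ncyc aP D"
proof -
  define rep where "rep v = (SOME d. d \<in> D \<and> tl_of G d = v)" for v
  have rep: "rep v \<in> D" "tl_of G (rep v) = v" if "v \<in> verts G" for v
    using someI_ex[OF vert_dart[OF that, unfolded Bex_def]] that by (auto simp: rep_def)
  have "inj_on (\<lambda>v. orbit aP (rep v)) (verts G)"
  proof (rule inj_onI)
    fix v1 v2 assume v: "v1 \<in> verts G" "v2 \<in> verts G" "orbit aP (rep v1) = orbit aP (rep v2)"
    have "rep v2 \<in> orbit aP (rep v2)" by (rule orbit_self[OF perm_aP])
    then have "rep v2 \<in> orbit aP (rep v1)" using v by simp
    then have "rep v2 \<in> {d'\<in>D. tl_of G d' = tl_of G (rep v1)}" using aP_orbit[OF rep(1)[OF v(1)]] by simp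
    then have "tl_of G (rep v2) = tl_of G (rep v1)" by simp
    then show "v1 = v2" using rep v by simp
  qed
  moreover have "(\<lambda>v. orbit aP (rep v)) ` verts G \<subseteq> orbit aP ` D" using rep by auto
  ultimately show ?thesis unfolding ncyc_def using finD by (intro card_inj_on_le) auto
qed

definition XD where "XD = {d \<in> D. cross d}"
definition ID where "ID = {d \<in> D. \<not> cross d}"

lemma count_B: "card D + card XD \<le> 2 * ncyc bP D"
proof -
  have o1: "orbit bP d = {d}" if "d \<in> XD" for d
    using that by (simp add: orbit_eq_singleton_iff bP_def XD_def)
  have o2: "orbit bP d \<subseteq> ID \<and> card (orbit bP d) \<le> 2" if d: "d \<in> ID" for d
  proof -
    have "(bP ^^ n) d \<in> {d, rv G d}" for n
    proof (induction n)
      case 0 then show ?case by simp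
    next
      case (Suc n) then show ?case using d by (auto simp: bP_def ID_def dart_props cross_rv)
    qed
    then have sub: "orbit bP d \<subseteq> {d, rv G d}" by (auto simp: orbit_altdef_permutation[OF perm_bP])
    moreover have "{d, rv G d} \<subseteq> ID" using d by (auto simp: ID_def dart_props cross_rv)
    moreover have "card (orbit bP d) \<le> 2"
    proof -
      have "card {d, rv G d} \<le> 2" by (cases "d = rv G d") auto
      then show ?thesis using card_mono[OF _ sub] by (meson finite.emptyI finite.insertI order_trans)
    qed
    ultimately show ?thesis by blast
  qed
  have finI: "finite ID" "finite XD" using finD by (auto simp: ID_def XD_def)
  have DU: "D = ID \<union> XD" "ID \<inter> XD = {}" by (auto simp: ID_def XD_def)
  have img: "orbit bP ` D = orbit bP ` ID \<union> orbit bP ` XD" using DU by auto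
  have disj: "orbit bP ` ID \<inter> orbit bP ` XD = {}"
  proof -
    { fix d e assume de: "d \<in> ID" "e \<in> XD" "orbit bP d = orbit bP e"
      have a: "orbit bP d \<subseteq> ID" using o2[OF de(1)] by blast
      have b: "orbit bP d = {e}" using o1[OF de(2)] de(3) by simp
      from a b have "e \<in> ID" by simp
      then have False using \<open>e \<in> XD\<close> DU by auto }
    then show ?thesis by blast
  qed
  have cX: "card (orbit bP ` XD) = card XD"
    using o1 by (subst card_image) (auto intro!: inj_onI)
  have "card ID = card (\<Union> (orbit bP ` ID))"
  proof -
    have "\<Union> (orbit bP ` ID) = ID" using o2 orbit_self[OF perm_bP] by blast
    then show ?thesis by simp
  qed
  also have "\<dots> \<le> sum card (orbit bP ` ID)" by (rule card_Union_le_sum_card)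
  also have "\<dots> \<le> sum (\<lambda>_. 2) (orbit bP ` ID)" using o2 by (intro sum_mono) auto
  also have "\<dots> = 2 * card (orbit bP ` ID)" by simp
  finally have cI: "card ID \<le> 2 * card (orbit bP ` ID)" .
  have "ncyc bP D = card (orbit bP ` ID) + card (orbit bP ` XD)"
    unfolding ncyc_def img using finI disj by (simp add: card_Un_disjoint)
  moreover have "card D = card ID + card XD" using DU finI by (simp add: card_Un_disjoint)
  ultimately show ?thesis using cI cX by simp
qed

end



context avd begin

abbreviation "EE \<equiv> cedges aP bP D"

lemma same_vert_conn:
  assumes "d1 \<in> D" "d2 \<in> D" "tl_of G d1 = tl_of G d2" shows "(d1, d2) \<in> EE\<^sup>*"
proof -
  have "d2 \<in> orbit aP d1" using aP_orbit[OF assms(1)] assms by auto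
  then show ?thesis
  proof (induction rule: orbit.induct)
    case base
    have "(d1, aP d1) \<in> EE" using assms(1) unfolding cedges_def by blast
    then show ?case by simp
  next
    case (step z)
    have "z \<in> D" using orbit_in_D[OF aP_perm assms(1)] step.hyps by auto
    then have "(z, aP z) \<in> EE" unfolding cedges_def by blast
    then show ?case using step.IH by (rule rtrancl_into_rtrancl[rotated])
  qed
qed

lemma walk_conn:
  assumes "is_walk G u ds x" "\<forall>d\<in>set ds. \<not> cross d" "d1 \<in> D" "tl_of G d1 = u" "d2 \<in> D" "tl_of G d2 = x"
  shows "(d1, d2) \<in> EE\<^sup>*"
  using assms
proof (induction ds arbitrary: u d1)
  case Nil then show ?case using same_vert_conn by simp
next
  case (Cons d ds)
  have dD: "d \<in> D" "tl_of G d = u" using Cons.prems by auto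
  have c1: "(d1, d) \<in> EE\<^sup>*" using same_vert_conn Cons.prems dD by simp
  have "bP d = rv G d" using dD Cons.prems by (simp add: bP_def)
  then have "(d, rv G d) \<in> EE" using dD unfolding cedges_def by force
  moreover have "(rv G d, d2) \<in> EE\<^sup>*"
    using Cons.IH[of "hd_of G d" "rv G d"] Cons.prems dD dart_props by auto
  ultimately show ?case using c1 by (meson converse_rtrancl_into_rtrancl rtrancl_trans)
qed

lemma conn_to_site:
  assumes "y \<in> D" "s \<in> S" "lab (tl_of G y) = s" "ds \<in> D" "tl_of G ds = fst s"
  shows "(ds, y) \<in> EE\<^sup>*"
proof -
  have "tl_of G y \<in> cell G s S" using lab_in[OF dart_props(1)[OF assms(1)]] assms by simp
  then obtain P where P: "is_walk G (fst s) P (tl_of G y)"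
    "\<forall>d\<in>set P. tl_of G d \<in> cell G s S \<and> hd_of G d \<in> cell G s S"
    using cell_walk[OF assms(2)] by blast
  have "\<forall>d\<in>set P. \<not> cross d" using P(2) lab_eq[OF assms(2)] by (simp add: cross_def)
  then show ?thesis using walk_conn[OF P(1)] assms by blast
qed

lemma count_C: "ncomp aP bP D \<le> 3"
proof -
  let ?K = "cls EE"
  let ?L = "\<lambda>y. lab (tl_of G y)"
  have key: "?K y1 = ?K y2" if "y1 \<in> D" "y2 \<in> D" "?L y1 = ?L y2" for y1 y2
  proof -
    let ?s = "?L y1"
    have sS: "?s \<in> S" using lab_in dart_props that by blast
    obtain ds where ds: "ds \<in> D" "tl_of G ds = fst ?s" using vert_dart site_vert[OF sS] by blast
    have "y1 \<in> ?K ds" "y2 \<in> ?K ds" using conn_to_site[OF _ sS _ ds] that by (auto simp: cls_def)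
    then show ?thesis using cls_eq[OF sym_cedges] by metis
  qed
  define h where "h s = ?K (SOME y. y \<in> D \<and> ?L y = s)" for s
  have "?K ` D = h ` (?L ` D)"
  proof (intro set_eqI iffI)
    fix C assume "C \<in> ?K ` D"
    then obtain y where y: "y \<in> D" "C = ?K y" by auto
    have "(SOME y'. y' \<in> D \<and> ?L y' = ?L y) \<in> D \<and> ?L (SOME y'. y' \<in> D \<and> ?L y' = ?L y) = ?L y"
      by (rule someI[of _ y]) (simp add: y)
    then have "h (?L y) = C" unfolding h_def using key y by metis
    then show "C \<in> h ` (?L ` D)" using y by blast
  next
    fix C assume "C \<in> h ` (?L ` D)"
    then obtain y where y: "y \<in> D" "C = h (?L y)" by auto
    have "(SOME y'. y' \<in> D \<and> ?L y' = ?L y) \<in> D \<and> ?L (SOME y'. y' \<in> D \<and> ?L y' = ?L y) = ?L y"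
      by (rule someI[of _ y]) (simp add: y)
    then show "C \<in> ?K ` D" unfolding h_def y by blast
  qed
  then have "ncomp aP bP D \<le> card (?L ` D)"
    unfolding ncomp_def by (simp add: card_image_le finD)
  also have "\<dots> \<le> card S"
    using lab_in dart_props by (intro card_mono[OF finS]) auto
  finally show ?thesis using c3 by simp
qed

lemma psi_lab: "d \<in> D \<Longrightarrow> lab (tl_of G (psi d)) = lab (tl_of G d)"
  by (auto simp: psi_eq rot_props face_perm_def dart_props cross_def)

lemma orbit_psi_lab: assumes "d \<in> D" "e \<in> orbit psi d" shows "lab (tl_of G e) = lab (tl_of G d)"
  using assms(2)
proof (induction rule: orbit.induct)
  case base then show ?case using psi_lab assms(1) by simp
next
  case (step z)
  have "z \<in> D" using orbit_in_D[OF psi_perm assms(1)] step.hyps by auto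
  then show ?case using psi_lab step.IH by simp
qed

lemma cross_exists:
  assumes "is_walk G u ds x" "lab u = s" "lab x \<noteq> s"
  shows "\<exists>d\<in>set ds. lab (tl_of G d) = s \<and> cross d"
  using assms
proof (induction ds arbitrary: u)
  case Nil then show ?case by simp
next
  case (Cons d ds)
  show ?case
  proof (cases "cross d")
    case True then show ?thesis using Cons.prems by auto
  next
    case False
    then have "lab (hd_of G d) = s" using Cons.prems by (auto simp: cross_def)
    then show ?thesis using Cons.IH[of "hd_of G d"] Cons.prems by auto
  qed
qed

lemma walk_darts: "is_walk G u ds x \<Longrightarrow> set ds \<subseteq> D"
  by (induction ds arbitrary: u) auto

lemma site_cross: assumes "s \<in> S" shows "\<exists>z\<in>D. cross z \<and> lab (tl_of G z) = s"
proof -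
  have "card (S - {s}) = 2" using c3 assms finS by simp
  then have "S - {s} \<noteq> {}" by (metis card.empty zero_neq_numeral)
  then obtain t where t: "t \<in> S" "t \<noteq> s" by blast
  obtain ds where ds: "is_walk G (fst s) ds (fst t)"
    using conn site_vert assms t unfolding connected_map_def by blast
  have "lab (fst s) = s" "lab (fst t) = t" using lab_site assms t by auto
  then obtain d where "d \<in> set ds" "lab (tl_of G d) = s" "cross d" using cross_exists[OF ds] t by auto
  moreover have "d \<in> D" using ds \<open>d \<in> set ds\<close> walk_darts by blast
  ultimately show ?thesis by blast
qed

definition F0 where "F0 = {f \<in> faces G. \<forall>d\<in>f. \<not> cross d}"

lemma count_psi: "card F0 + 3 \<le> ncyc psi D"
proof -
  have F0sub: "F0 \<subseteq> orbit psi ` D"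
  proof
    fix f assume f: "f \<in> F0"
    then obtain d where d: "d \<in> D" "f = orbit phi d" "\<forall>e\<in>f. \<not> cross e"
      unfolding F0_def faces_orbits by blast
    have "orbit psi d = orbit phi d"
    proof (rule orbit_cong)
      show "d \<in> orbit phi d" by (rule orbit_self[OF perm_phi])
      fix s assume "s \<in> orbit phi d"
      then have "s \<in> D" "\<not> cross s" using d orbit_in_D[OF phi_perm d(1)] by auto
      then show "psi s = phi s" by (simp add: psi_eq phi_eq)
    qed
    then show "f \<in> orbit psi ` D" using d by auto
  qed
  define z where "z s = (SOME z. z \<in> D \<and> cross z \<and> lab (tl_of G z) = s)" for s
  have z: "z s \<in> D" "cross (z s)" "lab (tl_of G (z s)) = s" if "s \<in> S" for s
    using someI_ex[OF site_cross[OF that, unfolded Bex_def]] by (auto simp: z_def)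
  define g where "g s = orbit psi (z s)" for s
  have inj: "inj_on g S"
  proof (rule inj_onI)
    fix s t assume st: "s \<in> S" "t \<in> S" "g s = g t"
    have "z t \<in> orbit psi (z s)" using st orbit_self[OF perm_psi, of "z t"] by (simp add: g_def)
    then show "s = t" using orbit_psi_lab[OF z(1)[OF st(1)]] z st by metis
  qed
  have gsub: "g ` S \<subseteq> orbit psi ` D" using z by (auto simp: g_def)
  have disj: "F0 \<inter> g ` S = {}"
  proof -
    { fix s assume s: "s \<in> S" "g s \<in> F0"
      have "z s \<in> g s" using orbit_self[OF perm_psi] by (simp add: g_def)
      then have False using s z unfolding F0_def by blast }
    then show ?thesis by blast
  qed
  have finF0: "finite F0" using finD unfolding F0_def faces_def by auto
  have "card F0 + 3 = card (F0 \<union> g ` S)"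
    using card_Un_disjoint[OF finF0 _ disj] finS card_image[OF inj] c3 by simp
  also have "\<dots> \<le> ncyc psi D" unfolding ncyc_def
    using F0sub gsub finD by (intro card_mono) auto
  finally show ?thesis .
qed

end



context avd begin

definition cr :: "'d set \<Rightarrow> nat" where "cr f = card {d \<in> f. cross d}"

lemma face_sub: "f \<in> faces G \<Longrightarrow> f \<subseteq> D"
  unfolding faces_orbits using orbit_in_D[OF phi_perm] by blast

lemma finite_face: "f \<in> faces G \<Longrightarrow> finite f"
  using face_sub finD finite_subset by blast

lemma face_orbit_any: assumes "f \<in> faces G" "e \<in> f" shows "f = orbit phi e"
proof -
  obtain d where "d \<in> D" "f = orbit phi d" using assms(1) unfolding faces_orbits by blast
  then show ?thesis using assms(2) orbit_same[OF perm_phi] by metis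
qed

lemma face_iter: "f \<in> faces G \<Longrightarrow> d \<in> f \<Longrightarrow> (phi ^^ n) d \<in> f"
  using face_orbit_any funpow_in_orbit orbit_self[OF perm_phi] by metis

lemma LAB:
  assumes f: "f \<in> faces G" and c0: "c0 \<in> f" "cross c0" and e: "e \<in> f"
  shows "\<exists>c\<in>f. cross c \<and> lab (hd_of G c) = lab (tl_of G e)"
proof -
  have fD: "f \<subseteq> D" using face_sub[OF f] .
  have claim: "\<exists>c\<in>f. cross c \<and> lab (hd_of G c) = lab (tl_of G ((phi ^^ Suc n) c0))" for n
  proof (induction n)
    case 0
    have "tl_of G (phi c0) = hd_of G c0" using phi_tl c0 fD by auto
    then show ?case using c0 by auto
  next
    case (Suc n)
    let ?y = "(phi ^^ Suc n) c0"
    have yf: "?y \<in> f" using face_iter[OF f c0(1)] .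
    have eq: "(phi ^^ Suc (Suc n)) c0 = phi ?y" by simp
    have tl: "tl_of G (phi ?y) = hd_of G ?y" using phi_tl yf fD by blast
    show ?case
    proof (cases "cross ?y")
      case True then show ?thesis using yf eq tl by metis
    next
      case False
      then have "lab (hd_of G ?y) = lab (tl_of G ?y)" by (simp add: cross_def)
      then show ?thesis using Suc.IH eq tl by metis
    qed
  qed
  have "f = orbit phi (phi c0)" using face_orbit_any[OF f] face_iter[OF f c0(1), of 1] by simp
  then obtain n where "e = (phi ^^ n) (phi c0)" using e orbit_altdef_permutation[OF perm_phi] by blast
  then have "e = (phi ^^ Suc n) c0" by (simp only: funpow_Suc_right comp_apply)
  then show ?thesis using claim by metis
qed

lemma const_lab:
  assumes f: "f \<in> faces G" and nc: "\<forall>d\<in>f. \<not> cross d" and d0: "d0 \<in> f" and e: "e \<in> f"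
  shows "lab (tl_of G e) = lab (tl_of G d0)"
proof -
  have fD: "f \<subseteq> D" using face_sub[OF f] .
  have claim: "lab (tl_of G ((phi ^^ n) d0)) = lab (tl_of G d0)" for n
  proof (induction n)
    case 0 then show ?case by simp
  next
    case (Suc n)
    let ?y = "(phi ^^ n) d0"
    have yf: "?y \<in> f" using face_iter[OF f d0] .
    have "tl_of G (phi ?y) = hd_of G ?y" using phi_tl yf fD by blast
    moreover have "lab (hd_of G ?y) = lab (tl_of G ?y)" using nc yf by (simp add: cross_def)
    ultimately show ?case using Suc.IH by simp
  qed
  obtain n where "e = (phi ^^ n) d0"
    using e face_orbit_any[OF f d0] orbit_altdef_permutation[OF perm_phi] by blast
  then show ?thesis using claim by simp
qed

lemma cr_not1: assumes f: "f \<in> faces G" shows "cr f \<noteq> 1"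
proof
  assume "cr f = 1"
  then obtain c where c: "{d \<in> f. cross d} = {c}" unfolding cr_def by (rule card_1_singletonE)
  then have cf: "c \<in> f" "cross c" by auto
  obtain c' where "c' \<in> f" "cross c'" "lab (hd_of G c') = lab (tl_of G c)" using LAB[OF f cf cf(1)] by blast
  then have "c' = c" using c by auto
  then show False using cf \<open>lab (hd_of G c') = lab (tl_of G c)\<close> by (simp add: cross_def)
qed

lemma labs_le_cr:
  assumes f: "f \<in> faces G" and "cr f \<ge> 1"
  shows "card ((\<lambda>e. lab (tl_of G e)) ` f) \<le> cr f"
proof -
  have "{d \<in> f. cross d} \<noteq> {}" using assms(2) unfolding cr_def by (metis card.empty not_one_le_zero)
  then obtain c0 where c0: "c0 \<in> f" "cross c0" by blast
  have "(\<lambda>e. lab (tl_of G e)) ` f \<subseteq> (\<lambda>c. lab (hd_of G c)) ` {d \<in> f. cross d}"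
  proof
    fix l assume "l \<in> (\<lambda>e. lab (tl_of G e)) ` f"
    then obtain e where e: "e \<in> f" "l = lab (tl_of G e)" by blast
    obtain c where c: "c \<in> f" "cross c" "lab (hd_of G c) = lab (tl_of G e)" using LAB[OF f c0 e(1)] by blast
    show "l \<in> (\<lambda>c. lab (hd_of G c)) ` {d \<in> f. cross d}"
      using c e by (intro image_eqI[of _ _ c]) auto
  qed
  then have "card ((\<lambda>e. lab (tl_of G e)) ` f) \<le> card ((\<lambda>c. lab (hd_of G c)) ` {d \<in> f. cross d})"
    using finite_face[OF f] by (intro card_mono) auto
  also have "\<dots> \<le> cr f" unfolding cr_def using finite_face[OF f] by (intro card_image_le) auto
  finally show ?thesis .
qed

lemma outer_cr: "cr (outer G) \<ge> 3"
proof -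
  let ?o = "outer G"
  have of: "?o \<in> faces G" by (rule outer_face)
  have Ssub: "S \<subseteq> (\<lambda>e. lab (tl_of G e)) ` ?o"
  proof
    fix s assume sS: "s \<in> S"
    then obtain d where "d \<in> ?o" "tl_of G d = fst s" using sites unfolding on_outer_face_def by blast
    then show "s \<in> (\<lambda>e. lab (tl_of G e)) ` ?o" using lab_site[OF sS] by force
  qed
  have fin: "finite ((\<lambda>e. lab (tl_of G e)) ` ?o)" using finite_face[OF of] by simp
  have c: "3 \<le> card ((\<lambda>e. lab (tl_of G e)) ` ?o)" using card_mono[OF fin Ssub] c3 by simp
  show ?thesis
  proof (cases "cr ?o \<ge> 1")
    case True then show ?thesis using labs_le_cr[OF of] c by linarith
  next
    case False
    then have "card {d \<in> ?o. cross d} = 0" by (simp add: cr_def)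
    then have "{d \<in> ?o. cross d} = {}" using finite_face[OF of] by simp
    then have nc: "\<forall>d\<in>?o. \<not> cross d" by blast
    obtain d0 where d0: "d0 \<in> ?o" using c by fastforce
    have "(\<lambda>e. lab (tl_of G e)) ` ?o \<subseteq> {lab (tl_of G d0)}"
      using const_lab[OF of nc d0] by auto
    then have "card ((\<lambda>e. lab (tl_of G e)) ` ?o) \<le> 1" by (metis card_mono finite.emptyI finite.insertI card.empty card_insert_disjoint empty_iff One_nat_def)
    then show ?thesis using c by simp
  qed
qed

lemma faces_disj: "f \<in> faces G \<Longrightarrow> g \<in> faces G \<Longrightarrow> f \<noteq> g \<Longrightarrow> f \<inter> g = {}"
  using face_orbit_any by blast

lemma finF: "finite (faces G)" using finD unfolding faces_def by simp

lemma sum_cr: "(\<Sum>f\<in>faces G. cr f) = card XD"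
proof -
  have U: "(\<Union>f\<in>faces G. {d \<in> f. cross d}) = XD"
  proof
    show "(\<Union>f\<in>faces G. {d \<in> f. cross d}) \<subseteq> XD" using face_sub by (auto simp: XD_def)
    show "XD \<subseteq> (\<Union>f\<in>faces G. {d \<in> f. cross d})"
    proof
      fix d assume "d \<in> XD"
      then have "d \<in> D" "cross d" by (auto simp: XD_def)
      moreover have "orbit phi d \<in> faces G" using \<open>d \<in> D\<close> faces_orbits by auto
      moreover have "d \<in> orbit phi d" by (rule orbit_self[OF perm_phi])
      ultimately show "d \<in> (\<Union>f\<in>faces G. {d \<in> f. cross d})" by blast
    qed
  qed
  have "card (\<Union>f\<in>faces G. {d \<in> f. cross d}) = (\<Sum>f\<in>faces G. card {d \<in> f. cross d})"
    using finF finite_face faces_disj by (intro card_UN_disjoint) auto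
  then show ?thesis using U by (simp add: cr_def)
qed

lemma AVD_deg_cr: "f \<in> faces G \<Longrightarrow> AVD_deg G S f = cr f"
  unfolding AVD_deg_def cr_def using face_sub AVD_edge_iff by (metis (no_types, lifting) subsetD)

theorem main: "card (AVD_vertices G S - {outer G}) \<le> 1"
proof -
  define V where "V = card (verts G)"
  define n where "n = card D"
  define F where "F = card (faces G)"
  define X where "X = card XD"
  define Fp where "Fp = card {f \<in> faces G. cr f \<ge> 1}"
  define K where "K = card {f \<in> faces G. cr f \<ge> 3}"
  have ep: "ncyc aP D + ncyc bP D + ncyc psi D \<le> n + 2 * ncomp aP bP D"
    unfolding psi_def n_def using euler_perm[OF finD aP_perm bP_perm] .
  have cV: "V \<le> ncyc aP D" using count_V by (simp add: V_def)
  have cB: "n + X \<le> 2 * ncyc bP D" using count_B by (simp add: n_def X_def)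
  have cP: "card F0 + 3 \<le> ncyc psi D" by (rule count_psi)
  have cC: "ncomp aP bP D \<le> 3" by (rule count_C)
  have eu: "2 * int V - int n + 2 * int F = 4" using euler by (simp add: V_def n_def F_def)
  have FF: "F = card F0 + Fp"
  proof -
    have iff: "cr f \<ge> 1 \<longleftrightarrow> \<not> (\<forall>d\<in>f. \<not> cross d)" if "f \<in> faces G" for f
    proof -
      have fin: "finite {d \<in> f. cross d}" using finite_face[OF that] by simp
      have "cr f \<ge> 1 \<longleftrightarrow> card {d \<in> f. cross d} > 0" by (simp add: cr_def Suc_le_eq)
      also have "\<dots> \<longleftrightarrow> {d \<in> f. cross d} \<noteq> {}" using fin by (simp add: card_gt_0_iff)
      finally have "cr f \<ge> 1 \<longleftrightarrow> {d \<in> f. cross d} \<noteq> {}" .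
      then show ?thesis by blast
    qed
    have "faces G = F0 \<union> {f \<in> faces G. cr f \<ge> 1}"
      unfolding F0_def using iff by blast
    moreover have "F0 \<inter> {f \<in> faces G. cr f \<ge> 1} = {}"
      unfolding F0_def using iff by blast
    ultimately show ?thesis unfolding F_def Fp_def using finF
      by (metis (no_types, lifting) card_Un_disjoint finite_Un)
  qed
  have pt: "(if cr f \<ge> 1 then 2 else 0) + (if cr f \<ge> 3 then 1 else 0) \<le> cr f" if "f \<in> faces G" for f
    using cr_not1[OF that] by auto
  have "(\<Sum>f\<in>faces G. (if cr f \<ge> 1 then 2 else 0) + (if cr f \<ge> 3 then 1 else 0)) \<le> (\<Sum>f\<in>faces G. cr f)"
    using pt by (intro sum_mono) auto
  moreover have "(\<Sum>f\<in>faces G. (if cr f \<ge> 1 then 2 else 0) + (if cr f \<ge> 3 then 1 else 0)) = 2 * Fp + K"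
  proof -
    have a: "(\<Sum>f\<in>faces G. (if cr f \<ge> 1 then 2 else 0)) = (2::nat) * Fp"
      unfolding Fp_def using sum.inter_filter[OF finF, of "\<lambda>_. 2::nat" "\<lambda>f. cr f \<ge> 1"] by simp
    have b: "(\<Sum>f\<in>faces G. (if cr f \<ge> 3 then 1 else 0)) = (K::nat)"
      unfolding K_def using sum.inter_filter[OF finF, of "\<lambda>_. 1::nat" "\<lambda>f. cr f \<ge> 3"] by simp
    show ?thesis using a b by (simp add: sum.distrib)
  qed
  ultimately have cX: "2 * Fp + K \<le> X" using sum_cr by (simp add: X_def)
  have K2: "K \<le> 2" using ep cV cB cP cC eu FF cX by linarith
  have AV: "AVD_vertices G S = {f \<in> faces G. cr f \<ge> 3}"
    unfolding AVD_vertices_def using AVD_deg_cr by auto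
  have oin: "outer G \<in> {f \<in> faces G. cr f \<ge> 3}" using outer_face outer_cr by simp
  have "card (AVD_vertices G S - {outer G}) = K - 1"
    unfolding AV K_def using oin finF by (simp add: card_Diff_singleton)
  then show ?thesis using K2 by simp
qed

end

theorem mainTheorem10:
  fixes G :: "('v, 'd) pmap" and S :: "'v site set"
  assumes "plane_map G"
    and "connected_map G"
    and "no_neg_cycles G"
    and "unique_shortest_paths G"
    and "finite S" and "card S = 3"
    and "generic G S"
    and "independent G S"
    and "\<forall>s\<in>S. fst s \<in> verts G \<and> on_outer_face G (fst s)"
  shows "card (AVD_vertices G S - {outer G}) \<le> 1"
proof -
  interpret avd G S using assms by unfold_locales
  show ?thesis by (rule main)
qed

end
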